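(* There exists an online ranking game for NDCG with top-1 feedback (binary relevance, some fixed number of objects $m$) such that for every online learning algorithm there is an adversary strategy generating $r_1,\dots,r_T\in\{0,1\}^m$ with $$\max_\sigma\sum_{t=1}^T NDCG(\sigma,r_t)-\mathbb{E}\Big[\sum_{t=1}^T NDCG(\sigma_t,r_t)\Big]=\Omega(T).$$ The same lower bound holds with NDCG replaced by MAP or by AUC (for AUC, a loss, the regret is $\mathbb{E}\sum_t AUC(\sigma_t,r_t)-\min_\sigma\sum_t AUC(\sigma,r_t)$).
   Context: Objects are $\{1,\dots,m\}$; a ranking is a permutation $\sigma$ of $[m]$ with $\sigma(i)$ the rank of object $i$ and $\sigma^{-1}(j)$ the object at rank $j$. $NDCG(\sigma,r)=\frac{1}{Z(r)}\sum_{i=1}^m\frac{r(i)}{\log_2(1+\sigma(i))}$ with $Z(r)=\max_\sigma\sum_i\frac{r(i)}{\log_2(1+\sigma(i))}$; $MAP(\sigma,r)=\frac{1}{\|r\|_1}\sum_{i=1}^m\frac{\sum_{j\le i}\mathbb{1}(r(\sigma^{-1}(j))=1)}{i}\mathbb{1}(r(\sigma^{-1}(i))=1)$; $AUC(\sigma,r)=\frac{1}{N(r)}\sum_{i,j}\mathbb{1}(\sigma(i)<\sigma(j))\mathbb{1}(r(i)<r(j))$ with $N(r)=\|r\|_1(m-\|r\|_1)$. Game: an oblivious adversary fixes $r_1,\dots,r_T$ in advance; at round $t$ the learner (possibly randomized) outputs $\sigma_t$ and observes only $r_t(\sigma_t^{-1}(1))$, the relevance of the top-ranked object; the expectation is over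 the learner's randomization. *)

theory Defs
  imports "HOL-Probability.Probability" "HOL-Combinatorics.Permutations"
begin

text \<open>A ranking sigma permutes {1..m}; sigma i is the rank of object i,
  and inv sigma j is the object at rank j. A relevance vector is r :: nat => real
  (only its values on {1..m} matter).\<close>

type_synonym ranking = "nat \<Rightarrow> nat"
type_synonym relevance = "nat \<Rightarrow> real"

definition rankings :: "nat \<Rightarrow> ranking set" where
  "rankings m = {\<sigma>. \<sigma> permutes {1..m}}"

definition dcg :: "nat \<Rightarrow> ranking \<Rightarrow> relevance \<Rightarrow> real" where
  "dcg m \<sigma> r = (\<Sum>i\<in>{1..m}. r i / log 2 (1 + real (\<sigma> i)))"

definition NDCG :: "nat \<Rightarrow> ranking \<Rightarrow> relevance \<Rightarrow> real" where
  "NDCG m \<sigma> r = dcg m \<sigma> r / Max ((\<lambda>\<tau>. dcg m \<tau> r) ` rankings m)"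

definition norm1 :: "nat \<Rightarrow> relevance \<Rightarrow> real" where
  "norm1 m r = (\<Sum>i\<in>{1..m}. \<bar>r i\<bar>)"

definition MAP :: "nat \<Rightarrow> ranking \<Rightarrow> relevance \<Rightarrow> real" where
  "MAP m \<sigma> r = (1 / norm1 m r) *
     (\<Sum>i\<in>{1..m}. (real (card {j\<in>{1..i}. r (inv \<sigma> j) = 1}) / real i)
                    * (if r (inv \<sigma> i) = 1 then 1 else 0))"

definition AUC :: "nat \<Rightarrow> ranking \<Rightarrow> relevance \<Rightarrow> real" where
  "AUC m \<sigma> r = (1 / (norm1 m r * (real m - norm1 m r))) *
     (\<Sum>i\<in>{1..m}. \<Sum>j\<in>{1..m}. (if \<sigma> i < \<sigma> j then 1 else 0) * (if r i < r j then 1 else 0))"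

text \<open>A (possibly randomized) learner: given the history of its own past rankings and the
  observed top-1 feedback, it outputs a probability distribution over rankings.
  This is a behavioural strategy; since the set of rankings is finite, it is fully general.\<close>

type_synonym learner = "(ranking \<times> real) list \<Rightarrow> ranking pmf"

definition valid_learner :: "nat \<Rightarrow> learner \<Rightarrow> bool" where
  "valid_learner m L \<longleftrightarrow> (\<forall>h. set_pmf (L h) \<subseteq> rankings m)"

text \<open>Expected cumulative value of metric f over the remaining k rounds, given the history h;
  the current round index is length h (rounds are 0,1,...), the adversary's relevance
  at round t is rs t, and the feedback is the relevance of the top-ranked object.\<close>

fun exp_cum :: "(ranking \<Rightarrow> relevance \<Rightarrow> real) \<Rightarrow> learner \<Rightarrow> (nat \<Rightarrow> relevance)
                 \<Rightarrow> (ranking \<times> real) list \<Rightarrow> nat \<Rightarrow> real" where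
  "exp_cum f L rs h 0 = 0"
| "exp_cum f L rs h (Suc k) =
     measure_pmf.expectation (L h)
       (\<lambda>\<sigma>. f \<sigma> (rs (length h)) + exp_cum f L rs (h @ [(\<sigma>, rs (length h) (inv \<sigma> 1))]) k)"

definition binary_seq :: "nat \<Rightarrow> nat \<Rightarrow> (nat \<Rightarrow> relevance) \<Rightarrow> bool" where
  "binary_seq m T rs \<longleftrightarrow> (\<forall>t<T. \<forall>i\<in>{1..m}. rs t i \<in> {0, 1})"

definition regret_gain :: "nat \<Rightarrow> (ranking \<Rightarrow> relevance \<Rightarrow> real) \<Rightarrow> learner
                            \<Rightarrow> (nat \<Rightarrow> relevance) \<Rightarrow> nat \<Rightarrow> real" where
  "regret_gain m f L rs T =
     Max ((\<lambda>\<sigma>. \<Sum>t<T. f \<sigma> (rs t)) ` rankings m) - exp_cum f L rs [] T"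

definition regret_loss :: "nat \<Rightarrow> (ranking \<Rightarrow> relevance \<Rightarrow> real) \<Rightarrow> learner
                            \<Rightarrow> (nat \<Rightarrow> relevance) \<Rightarrow> nat \<Rightarrow> real" where
  "regret_loss m f L rs T =
     exp_cum f L rs [] T - Min ((\<lambda>\<sigma>. \<Sum>t<T. f \<sigma> (rs t)) ` rankings m)"

end

theory Submission
  imports Defs
begin

fun Avg :: "(nat \<Rightarrow> real) \<Rightarrow> nat set \<Rightarrow> nat \<Rightarrow> (nat list \<Rightarrow> real) \<Rightarrow> real" where
  "Avg w I 0 F = F []"
| "Avg w I (Suc k) F = (\<Sum>i\<in>I. w i * Avg w I k (\<lambda>ys. F (i # ys)))"

lemma Avg_lin: "Avg w I k (\<lambda>xs. a * F xs + b * G xs) = a * Avg w I k F + b * Avg w I k G"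
proof (induction k arbitrary: F G)
  case 0 then show ?case by simp
next
  case (Suc k) then show ?case
    by (simp add: sum.distrib sum_distrib_left algebra_simps)
qed

lemma Avg_const: assumes "sum w I = 1" shows "Avg w I k (\<lambda>_. c) = c"
proof (induction k)
  case 0 then show ?case by simp
next
  case (Suc k)
  have "(\<Sum>i\<in>I. w i * c) = sum w I * c" by (simp add: sum_distrib_right)
  then show ?case using Suc assms by simp
qed

lemma Avg_add_const: assumes "sum w I = 1"
  shows "Avg w I k (\<lambda>xs. c + F xs) = c + Avg w I k F"
proof (induction k arbitrary: F)
  case 0 then show ?case by simp
next
  case (Suc k)
  have "(\<Sum>i\<in>I. w i * (c + Avg w I k (\<lambda>ys. F (i # ys)))) = sum w I * c + (\<Sum>i\<in>I. w i * Avg w I k (\<lambda>ys. F (i # ys)))"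
    by (simp add: sum_distrib_right distrib_left sum.distrib mult.commute sum_distrib_left)
  then show ?case using Suc assms by simp
qed

lemma Avg_sum: assumes "finite A"
  shows "Avg w I k (\<lambda>xs. \<Sum>s\<in>A. G s xs) = (\<Sum>s\<in>A. Avg w I k (G s))"
proof (induction k arbitrary: G)
  case 0 then show ?case by simp
next
  case (Suc k) then show ?case
    by (simp add: sum_distrib_left) (rule sum.swap)
qed

lemma Avg_mono: assumes "\<And>i. i \<in> I \<Longrightarrow> w i \<ge> 0" "\<And>xs. F xs \<le> G xs"
  shows "Avg w I k F \<le> Avg w I k G"
  using assms(2)
proof (induction k arbitrary: F G)
  case 0 then show ?case by simp
next
  case (Suc k) then show ?case
    by (simp add: sum_mono mult_left_mono assms(1))
qed

lemma Avg_exists: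
  assumes fin: "finite I" and nn: "\<And>i. i \<in> I \<Longrightarrow> w i \<ge> 0" and s1: "sum w I = 1"
  shows "\<exists>xs. set xs \<subseteq> I \<and> length xs = k \<and> Avg w I k F \<le> F xs"
proof (induction k arbitrary: F)
  case 0 then show ?case by simp
next
  case (Suc k)
  have "\<forall>i. \<exists>ys. set ys \<subseteq> I \<and> length ys = k \<and> Avg w I k (\<lambda>ys. F (i # ys)) \<le> F (i # ys)"
    using Suc by blast
  then obtain ys where ys: "\<And>i. set (ys i) \<subseteq> I \<and> length (ys i) = k \<and>
        Avg w I k (\<lambda>zs. F (i # zs)) \<le> F (i # ys i)" by metis
  have ne: "I \<noteq> {}" using s1 by (metis sum.empty zero_neq_one)
  define g where "g i = F (i # ys i)" for i
  have "Max (g ` I) \<in> g ` I" using fin ne by simp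
  then obtain i0 where i0I: "i0 \<in> I" and eq: "g i0 = Max (g ` I)" by auto
  have i0: "i0 \<in> I" "\<And>i. i \<in> I \<Longrightarrow> g i \<le> g i0" using eq fin i0I by auto
  have "Avg w I (Suc k) F \<le> (\<Sum>i\<in>I. w i * g i0)"
    unfolding Avg.simps
  proof (rule sum_mono)
    fix i assume "i \<in> I"
    have "Avg w I k (\<lambda>ys. F (i # ys)) \<le> g i0" using ys[of i] i0(2)[OF \<open>i\<in>I\<close>] g_def by force
    then show "w i * Avg w I k (\<lambda>ys. F (i # ys)) \<le> w i * g i0"
      by (simp add: mult_left_mono nn \<open>i\<in>I\<close>)
  qed
  also have "\<dots> = sum w I * g i0" by (simp add: sum_distrib_right)
  also have "\<dots> = g i0" using s1 by simp
  finally show ?case using ys[of i0] i0(1) g_def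
    by (intro exI[of _ "i0 # ys i0"]) auto
qed

definition rsof :: "(nat \<Rightarrow> relevance) \<Rightarrow> nat \<Rightarrow> nat list \<Rightarrow> nat \<Rightarrow> relevance" where
  "rsof v n xs t = (if n \<le> t \<and> t - n < length xs then v (xs ! (t - n)) else (\<lambda>_. 0))"

lemma rsof_hd: "rsof v n (i # ys) n = v i"
  by (simp add: rsof_def)

lemma rsof_tl: "t \<ge> Suc n \<Longrightarrow> rsof v n (i # ys) t = rsof v (Suc n) ys t"
proof -
  assume "t \<ge> Suc n"
  then have "t - n = Suc (t - Suc n)" by simp
  then show ?thesis by (simp add: rsof_def)
qed

lemma exp_cum_cong:
  "(\<And>t. t \<ge> length h \<Longrightarrow> rs t = rs' t) \<Longrightarrow> exp_cum f L rs h k = exp_cum f L rs' h k"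
proof (induction k arbitrary: h)
  case 0 then show ?case by simp
next
  case (Suc k)
  have "\<And>\<sigma>. exp_cum f L rs (h @ [(\<sigma>, rs (length h) (inv \<sigma> 1))]) k
          = exp_cum f L rs' (h @ [(\<sigma>, rs (length h) (inv \<sigma> 1))]) k"
    by (rule Suc.IH) (use Suc.prems in auto)
  then show ?case using Suc.prems by simp
qed

lemma finite_rankings: "finite (rankings m)"
  unfolding rankings_def by (rule finite_permutations) simp

lemma exp_as_sum: assumes "valid_learner m L"
  shows "measure_pmf.expectation (L h) g = (\<Sum>\<sigma>\<in>rankings m. pmf (L h) \<sigma> * g \<sigma>)"
  using assms unfolding valid_learner_def
  by (subst integral_measure_pmf_real[OF finite_rankings]) (auto simp: mult.commute)

lemma pmf_sum1: assumes "valid_learner m L" shows "(\<Sum>\<sigma>\<in>rankings m. pmf (L h) \<sigma>) = 1"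
  using assms unfolding valid_learner_def by (intro sum_pmf_eq_1 finite_rankings) auto

lemma Avg_scale_add: assumes "sum w I = 1"
  shows "Avg w I k (\<lambda>ys. p * (c + E ys)) = p * (c + Avg w I k E)"
proof -
  have "Avg w I k (\<lambda>ys. p * (c + E ys)) = Avg w I k (\<lambda>xs. p * (c + E xs) + 0 * (c + E xs))" by simp
  also have "\<dots> = p * Avg w I k (\<lambda>xs. c + E xs) + 0 * Avg w I k (\<lambda>xs. c + E xs)" by (rule Avg_lin)
  also have "\<dots> = p * (c + Avg w I k E)" using Avg_add_const[OF assms] by simp
  finally show ?thesis .
qed

definition gs :: "(nat \<Rightarrow> real) \<Rightarrow> nat set \<Rightarrow> (nat \<Rightarrow> relevance) \<Rightarrow> (ranking \<Rightarrow> relevance \<Rightarrow> real) \<Rightarrow> ranking \<Rightarrow> real" where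
  "gs w I v f \<sigma> = (\<Sum>i\<in>I. w i * f \<sigma> (v i))"

definition Pm :: "(nat \<Rightarrow> real) \<Rightarrow> nat set \<Rightarrow> (nat \<Rightarrow> relevance) \<Rightarrow> nat \<Rightarrow> real" where
  "Pm w I v x = (\<Sum>i\<in>I. w i * (if v i x = 1 then 1 else 0))"

lemma step_eq:
  assumes VL: "valid_learner m L" and s1: "sum w I = 1" and fin: "finite I" and hn: "length h = n"
  shows "Avg w I (Suc k) (\<lambda>xs. exp_cum f L (rsof v n xs) h (Suc k))
    = (\<Sum>\<sigma>\<in>rankings m. pmf (L h) \<sigma> * (gs w I v f \<sigma> +
         (\<Sum>i\<in>I. w i * Avg w I k (\<lambda>ys. exp_cum f L (rsof v (Suc n) ys) (h @ [(\<sigma>, v i (inv \<sigma> 1))]) k))))"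
proof -
  define B where "B \<sigma> b = Avg w I k (\<lambda>ys. exp_cum f L (rsof v (Suc n) ys) (h @ [(\<sigma>, b)]) k)" for \<sigma> b
  have F: "exp_cum f L (rsof v n (i # ys)) h (Suc k)
      = (\<Sum>\<sigma>\<in>rankings m. pmf (L h) \<sigma> * (f \<sigma> (v i) + exp_cum f L (rsof v (Suc n) ys) (h @ [(\<sigma>, v i (inv \<sigma> 1))]) k))"
    for i ys
  proof -
    have c: "exp_cum f L (rsof v n (i # ys)) (h @ [(\<sigma>, b)]) k
           = exp_cum f L (rsof v (Suc n) ys) (h @ [(\<sigma>, b)]) k" for \<sigma> b
      by (rule exp_cum_cong) (simp add: hn rsof_tl)
    show ?thesis using hn by (simp add: exp_as_sum[OF VL] rsof_hd c)
  qed
  have A: "Avg w I k (\<lambda>ys. exp_cum f L (rsof v n (i # ys)) h (Suc k))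
      = (\<Sum>\<sigma>\<in>rankings m. pmf (L h) \<sigma> * (f \<sigma> (v i) + B \<sigma> (v i (inv \<sigma> 1))))" for i
    unfolding F by (simp add: Avg_sum finite_rankings Avg_scale_add[OF s1] B_def)
  have "Avg w I (Suc k) (\<lambda>xs. exp_cum f L (rsof v n xs) h (Suc k))
      = (\<Sum>i\<in>I. w i * (\<Sum>\<sigma>\<in>rankings m. pmf (L h) \<sigma> * (f \<sigma> (v i) + B \<sigma> (v i (inv \<sigma> 1)))))"
    by (simp only: Avg.simps A)
  also have "\<dots> = (\<Sum>\<sigma>\<in>rankings m. \<Sum>i\<in>I. pmf (L h) \<sigma> * (w i * f \<sigma> (v i) + w i * B \<sigma> (v i (inv \<sigma> 1))))"
    by (subst sum.swap) (simp add: sum_distrib_left algebra_simps)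
  also have "\<dots> = (\<Sum>\<sigma>\<in>rankings m. pmf (L h) \<sigma> * (gs w I v f \<sigma> + (\<Sum>i\<in>I. w i * B \<sigma> (v i (inv \<sigma> 1)))))"
    by (simp add: gs_def sum_distrib_left sum.distrib distrib_left)
  finally show ?thesis by (simp add: B_def)
qed

lemma split01:
  assumes s1: "sum w I = 1" and bin: "\<And>i. i \<in> I \<Longrightarrow> v i x \<in> {0,1}"
  shows "(\<Sum>i\<in>I. w i * B (v i x)) = Pm w I v x * B 1 + (1 - Pm w I v x) * B 0"
proof -
  have "(\<Sum>i\<in>I. w i * B (v i x)) = (\<Sum>i\<in>I. (w i * (if v i x = 1 then 1 else 0)) * B 1 + (w i - w i * (if v i x = 1 then 1 else 0)) * B 0)"
  proof (rule sum.cong)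
    fix i assume "i \<in> I"
    then have "v i x = 0 \<or> v i x = 1" using bin by auto
    then show "w i * B (v i x) = (w i * (if v i x = 1 then 1 else 0)) * B 1 + (w i - w i * (if v i x = 1 then 1 else 0)) * B 0"
      by auto
  qed simp
  also have "\<dots> = Pm w I v x * B 1 + (sum w I - Pm w I v x) * B 0"
    by (simp add: Pm_def sum.distrib sum_distrib_right[symmetric] sum_subtractf)
  finally show ?thesis using s1 by simp
qed

lemma main_ind:
  assumes VL: "valid_learner m L" and fin: "finite I"
    and nn1: "\<And>i. i \<in> I \<Longrightarrow> w1 i \<ge> 0" and s1: "sum w1 I = 1"
    and nn2: "\<And>i. i \<in> I \<Longrightarrow> w2 i \<ge> 0" and s2: "sum w2 I = 1"
    and bin: "\<And>i x. i \<in> I \<Longrightarrow> x \<in> {1..m} \<Longrightarrow> v i x \<in> {0,1}"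
    and marg: "\<And>x. x \<in> {1..m} \<Longrightarrow> Pm w1 I v x = Pm w2 I v x"
    and bnd: "\<And>\<sigma>. \<sigma> \<in> rankings m \<Longrightarrow> gs w1 I v f \<sigma> + gs w2 I v f \<sigma> \<le> M"
    and m1: "m \<ge> 1"
  shows "length h = n \<Longrightarrow> Avg w1 I k (\<lambda>xs. exp_cum f L (rsof v n xs) h k)
          + Avg w2 I k (\<lambda>xs. exp_cum f L (rsof v n xs) h k) \<le> real k * M"
proof (induction k arbitrary: h n)
  case 0 then show ?case by simp
next
  case (Suc k)
  define B where "B w \<sigma> b = Avg w I k (\<lambda>ys. exp_cum f L (rsof v (Suc n) ys) (h @ [(\<sigma>, b)]) k)" for w \<sigma> b
  have IH: "B w1 \<sigma> b + B w2 \<sigma> b \<le> real k * M" for \<sigma> b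
    unfolding B_def by (rule Suc.IH) (simp add: Suc.prems)
  have Pm01: "0 \<le> Pm w1 I v x \<and> Pm w1 I v x \<le> 1" for x
  proof -
    have "Pm w1 I v x \<le> sum w1 I" unfolding Pm_def by (rule sum_mono) (use nn1 in auto)
    moreover have "0 \<le> Pm w1 I v x" unfolding Pm_def by (rule sum_nonneg) (use nn1 in auto)
    ultimately show ?thesis using s1 by simp
  qed
  have inner: "(\<Sum>i\<in>I. w1 i * B w1 \<sigma> (v i (inv \<sigma> 1))) + (\<Sum>i\<in>I. w2 i * B w2 \<sigma> (v i (inv \<sigma> 1))) \<le> real k * M"
    if "\<sigma> \<in> rankings m" for \<sigma>
  proof -
    define x where "x = inv \<sigma> 1"
    have xm: "x \<in> {1..m}"
    proof -
      have p: "\<sigma> permutes {1..m}" using that by (simp add: rankings_def)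
      then have "inv \<sigma> permutes {1..m}" by (rule permutes_inv)
      show ?thesis unfolding x_def using permutes_in_image[OF \<open>inv \<sigma> permutes {1..m}\<close>] m1 by auto
    qed
    have b: "\<And>i. i \<in> I \<Longrightarrow> v i x \<in> {0,1}" using bin xm by auto
    have e1: "(\<Sum>i\<in>I. w1 i * B w1 \<sigma> (v i x)) = Pm w1 I v x * B w1 \<sigma> 1 + (1 - Pm w1 I v x) * B w1 \<sigma> 0"
      by (rule split01[where v=v and x=x, OF s1 b])
    have e2: "(\<Sum>i\<in>I. w2 i * B w2 \<sigma> (v i x)) = Pm w1 I v x * B w2 \<sigma> 1 + (1 - Pm w1 I v x) * B w2 \<sigma> 0"
      using split01[where v=v and x=x and B="B w2 \<sigma>", OF s2 b] marg[OF xm] by simp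
    have "Pm w1 I v x * (B w1 \<sigma> 1 + B w2 \<sigma> 1) + (1 - Pm w1 I v x) * (B w1 \<sigma> 0 + B w2 \<sigma> 0)
        \<le> Pm w1 I v x * (real k * M) + (1 - Pm w1 I v x) * (real k * M)"
      using Pm01[of x] IH by (intro add_mono mult_left_mono) auto
    then show ?thesis using e1 e2 unfolding x_def by (simp add: algebra_simps)
  qed
  have "Avg w1 I (Suc k) (\<lambda>xs. exp_cum f L (rsof v n xs) h (Suc k))
      + Avg w2 I (Suc k) (\<lambda>xs. exp_cum f L (rsof v n xs) h (Suc k))
    = (\<Sum>\<sigma>\<in>rankings m. pmf (L h) \<sigma> * ((gs w1 I v f \<sigma> + gs w2 I v f \<sigma>) +
         ((\<Sum>i\<in>I. w1 i * B w1 \<sigma> (v i (inv \<sigma> 1))) + (\<Sum>i\<in>I. w2 i * B w2 \<sigma> (v i (inv \<sigma> 1))))))"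
    unfolding step_eq[OF VL s1 fin Suc.prems] step_eq[OF VL s2 fin Suc.prems] B_def
    by (simp add: sum.distrib distrib_left)
  also have "\<dots> \<le> (\<Sum>\<sigma>\<in>rankings m. pmf (L h) \<sigma> * (M + real k * M))"
    by (intro sum_mono mult_left_mono add_mono bnd inner) auto
  also have "\<dots> = M + real k * M"
    using pmf_sum1[OF VL, of h] by (simp add: sum_distrib_right[symmetric])
  finally show ?case by (simp add: algebra_simps)
qed

lemma fixed_avg:
  assumes s1: "sum w I = 1"
  shows "Avg w I k (\<lambda>xs. \<Sum>t\<in>{n..<n+k}. f s (rsof v n xs t)) = real k * gs w I v f s"
proof (induction k arbitrary: n)
  case 0 then show ?case by simp
next
  case (Suc k)
  have e: "(\<Sum>t\<in>{n..<n + Suc k}. f s (rsof v n (i # ys) t)) = f s (v i) + (\<Sum>t\<in>{Suc n..<Suc n + k}. f s (rsof v (Suc n) ys t))" for i ys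
  proof -
    have "(\<Sum>t\<in>{n..<n + Suc k}. f s (rsof v n (i # ys) t)) = f s (rsof v n (i # ys) n) + (\<Sum>t\<in>{Suc n..<n + Suc k}. f s (rsof v n (i # ys) t))"
      by (rule sum.atLeast_Suc_lessThan) simp
    also have "(\<Sum>t\<in>{Suc n..<n + Suc k}. f s (rsof v n (i # ys) t)) = (\<Sum>t\<in>{Suc n..<Suc n + k}. f s (rsof v (Suc n) ys t))"
      by (rule sum.cong) (auto simp: rsof_tl)
    finally show ?thesis by (simp add: rsof_hd)
  qed
  have "Avg w I (Suc k) (\<lambda>xs. \<Sum>t\<in>{n..<n+Suc k}. f s (rsof v n xs t)) = (\<Sum>i\<in>I. w i * (f s (v i) + real k * gs w I v f s))"
    by (simp only: Avg.simps e Avg_add_const[OF s1] Suc.IH)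
  also have "\<dots> = gs w I v f s + sum w I * (real k * gs w I v f s)"
    by (simp add: gs_def distrib_left sum.distrib sum_distrib_right)
  finally show ?case using s1 by (simp add: algebra_simps)
qed

lemma generic_gain:
  assumes fin: "finite I"
    and nna: "\<And>i. i \<in> I \<Longrightarrow> wa i \<ge> 0" and s1: "sum wa I = 1"
    and nnb: "\<And>i. i \<in> I \<Longrightarrow> wb i \<ge> 0" and s2: "sum wb I = 1"
    and bin: "\<And>i x. i \<in> I \<Longrightarrow> x \<in> {1..m} \<Longrightarrow> v i x \<in> {0,1}"
    and marg: "\<And>x. x \<in> {1..m} \<Longrightarrow> Pm wa I v x = Pm wb I v x"
    and bnd: "\<And>\<sigma>. \<sigma> \<in> rankings m \<Longrightarrow> gs wa I v f \<sigma> + gs wb I v f \<sigma> \<le> M"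
    and m1: "m \<ge> 1"
    and r1: "\<rho>a \<in> rankings m" and r2: "\<rho>b \<in> rankings m"
    and gap: "gs wa I v f \<rho>a + gs wb I v f \<rho>b - M \<ge> 2 * c"
    and VL: "valid_learner m L"
  shows "\<exists>rs. binary_seq m T rs \<and> regret_gain m f L rs T \<ge> c * real T"
proof -
  define R where "R xs = regret_gain m f L (rsof v 0 xs) T" for xs
  define E where "E xs = exp_cum f L (rsof v 0 xs) [] T" for xs
  have lowR: "Avg w I T R \<ge> real T * gs w I v f \<rho> - Avg w I T E"
    if nn: "\<And>i. i \<in> I \<Longrightarrow> w i \<ge> 0" and sw: "sum w I = 1" and r: "\<rho> \<in> rankings m" for w \<rho>
  proof -
    have h1: "\<And>xs. 1 * (\<Sum>t\<in>{0..<0+T}. f \<rho> (rsof v 0 xs t)) + (-1) * E xs \<le> R xs"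
      unfolding R_def regret_gain_def E_def
      using r by (simp add: finite_rankings atLeast0LessThan)
    have "Avg w I T (\<lambda>xs. 1 * (\<Sum>t\<in>{0..<0+T}. f \<rho> (rsof v 0 xs t)) + (-1) * E xs) \<le> Avg w I T R"
      by (rule Avg_mono[OF nn h1])
    then show ?thesis unfolding Avg_lin fixed_avg[OF sw] by simp
  qed
  have "Avg wa I T E + Avg wb I T E \<le> real T * M"
    unfolding E_def by (rule main_ind[OF VL fin nna s1 nnb s2 bin marg bnd m1]) auto
  then have "Avg wa I T R + Avg wb I T R \<ge> real T * (gs wa I v f \<rho>a + gs wb I v f \<rho>b - M)"
    using lowR[OF nna s1 r1] lowR[OF nnb s2 r2] by (simp add: algebra_simps)
  moreover have "real T * (gs wa I v f \<rho>a + gs wb I v f \<rho>b - M) \<ge> real T * (2 * c)"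
    using gap by (intro mult_left_mono) auto
  ultimately have "Avg wa I T R \<ge> c * real T \<or> Avg wb I T R \<ge> c * real T" by argo
  then obtain w where nn: "\<And>i. i \<in> I \<Longrightarrow> w i \<ge> 0" and sw: "sum w I = 1" and A: "Avg w I T R \<ge> c * real T"
    using nna s1 nnb s2 by blast
  obtain xs where xs: "set xs \<subseteq> I" "length xs = T" "Avg w I T R \<le> R xs"
    using Avg_exists[OF fin nn sw] by blast
  have "binary_seq m T (rsof v 0 xs)"
    unfolding binary_seq_def
  proof (intro allI impI ballI)
    fix t i assume "t < T" "i \<in> {1..m}"
    then have "xs ! t \<in> I" using xs by auto
    then show "rsof v 0 xs t i \<in> {0,1}" using bin \<open>i \<in> {1..m}\<close> \<open>t<T\<close> xs(2) by (simp add: rsof_def)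
  qed
  then show ?thesis using A xs(3) unfolding R_def by force
qed

lemma set13: "{1..3::nat} = {1,2,3}" by auto
lemma set12: "{1..2::nat} = {1,2}" by auto

lemma perm3_cases:
  assumes "\<sigma> \<in> rankings 3"
  shows "(\<sigma> 1 = 1 \<and> \<sigma> 2 = 2 \<and> \<sigma> 3 = 3) \<or> (\<sigma> 1 = 1 \<and> \<sigma> 2 = 3 \<and> \<sigma> 3 = 2) \<or>
         (\<sigma> 1 = 2 \<and> \<sigma> 2 = 1 \<and> \<sigma> 3 = 3) \<or> (\<sigma> 1 = 2 \<and> \<sigma> 2 = 3 \<and> \<sigma> 3 = 1) \<or>
         (\<sigma> 1 = 3 \<and> \<sigma> 2 = 1 \<and> \<sigma> 3 = 2) \<or> (\<sigma> 1 = 3 \<and> \<sigma> 2 = 2 \<and> \<sigma> 3 = 1)"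
proof -
  have p: "\<sigma> permutes {1..3}" using assms by (simp add: rankings_def)
  have r: "\<sigma> i \<in> {1..3}" if "i \<in> {1..3}" for i using permutes_in_image[OF p] that by simp
  have inj: "\<sigma> i = \<sigma> j \<longleftrightarrow> i = j" for i j using permutes_inj[OF p] by (auto dest: injD)
  have a: "\<sigma> 1 \<in> {1,2,3}" "\<sigma> 2 \<in> {1,2,3}" "\<sigma> 3 \<in> {1,2,3}" using r[of 1] r[of 2] r[of 3] unfolding set13 by blast+
  have d: "\<sigma> 1 \<noteq> \<sigma> 2" "\<sigma> 1 \<noteq> \<sigma> 3" "\<sigma> 2 \<noteq> \<sigma> 3" using inj by auto
  show ?thesis using a d unfolding insert_iff empty_iff simp_thms by (elim disjE) simp_all
qed

lemma inv_val: assumes "\<sigma> \<in> rankings m" "\<sigma> i = j" shows "inv \<sigma> j = i"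
  using assms permutes_inverses(2)[of \<sigma>] by (auto simp: rankings_def)


lemma dcg3: "dcg 3 \<sigma> r = r 1 / log 2 (1 + real (\<sigma> 1)) + r 2 / log 2 (1 + real (\<sigma> 2)) + r 3 / log 2 (1 + real (\<sigma> 3))"
  unfolding dcg_def set13 by simp

lemma card_ind: "finite A \<Longrightarrow> real (card {j\<in>A. P j}) = (\<Sum>j\<in>A. if P j then 1 else 0)"
  by (simp add: sum.If_cases Int_def)

lemma MAP3: "MAP 3 \<sigma> r = (1 / norm1 3 r) *
   ((if r (inv \<sigma> 1) = 1 then 1 else 0) * (if r (inv \<sigma> 1) = 1 then 1 else 0)
  + ((if r (inv \<sigma> 1) = 1 then 1 else 0) + (if r (inv \<sigma> 2) = 1 then 1 else 0)) / 2 * (if r (inv \<sigma> 2) = 1 then 1 else 0)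
  + ((if r (inv \<sigma> 1) = 1 then 1 else 0) + (if r (inv \<sigma> 2) = 1 then 1 else 0) + (if r (inv \<sigma> 3) = 1 then 1 else 0)) / 3 * (if r (inv \<sigma> 3) = 1 then 1 else 0))"
proof -
  have sum3: "(\<Sum>i\<in>{1,2,3::nat}. F i) = F 1 + F 2 + F 3" for F :: "nat \<Rightarrow> real" by simp
  have c1: "real (card {j\<in>{1..1::nat}. P j}) = (if P 1 then 1 else 0)" for P
    by (subst card_ind) simp_all
  have c2: "real (card {j\<in>{1..2::nat}. P j}) = (if P 1 then 1 else 0) + (if P 2 then 1 else 0)" for P
  proof -
    have "real (card {j\<in>{1..2::nat}. P j}) = (\<Sum>j\<in>{1..2}. if P j then 1 else 0)" by (rule card_ind) simp
    also have "\<dots> = (if P 1 then 1 else 0) + (if P 2 then 1 else 0)" unfolding set12 by simp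
    finally show ?thesis .
  qed
  have c3: "real (card {j\<in>{1..3::nat}. P j}) = (if P 1 then 1 else 0) + (if P 2 then 1 else 0) + (if P 3 then 1 else 0)" for P
  proof -
    have "real (card {j\<in>{1..3::nat}. P j}) = (\<Sum>j\<in>{1..3}. if P j then 1 else 0)" by (rule card_ind) simp
    also have "\<dots> = (if P 1 then 1 else 0) + (if P 2 then 1 else 0) + (if P 3 then 1 else 0)" unfolding set13 by simp
    finally show ?thesis .
  qed
  show ?thesis unfolding MAP_def unfolding set13 unfolding sum3 unfolding c1 c2 c3 by simp
qed

lemma norm13: "norm1 3 r = \<bar>r 1\<bar> + \<bar>r 2\<bar> + \<bar>r 3\<bar>"
  unfolding norm1_def set13 by simp

lemma lg2: "log 2 2 = 1" by simp
lemma lg4: "log 2 4 = 2"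
proof -
  have "log 2 4 = log 2 (2 ^ 2)" by simp
  also have "\<dots> = 2" by (subst log_nat_power) auto
  finally show ?thesis .
qed
lemma lg3: "1 < log 2 3" "log 2 3 < 2"
proof -
  have "log 2 2 < log 2 3" by (subst log_less_cancel_iff) auto
  then show "1 < log 2 3" by simp
  have "log 2 3 < log 2 4" by (subst log_less_cancel_iff) auto
  then show "log 2 3 < 2" using lg4 by simp
qed

definition vec3 :: "real \<Rightarrow> real \<Rightarrow> real \<Rightarrow> relevance" where
  "vec3 a b c = (\<lambda>x. if x = 1 then a else if x = 2 then b else if x = 3 then c else 0)"

lemma vec3_simps[simp]: "vec3 a b c 1 = a" "vec3 a b c (Suc 0) = a" "vec3 a b c 2 = b" "vec3 a b c 3 = c"
  by (simp_all add: vec3_def)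

definition dd :: "nat \<Rightarrow> real" where "dd k = 1 / log 2 (1 + real k)"

lemma dcg_vec3: "dcg 3 \<sigma> (vec3 a b c) = a * dd (\<sigma> 1) + b * dd (\<sigma> 2) + c * dd (\<sigma> 3)"
  by (simp add: dcg3 dd_def)

lemma dd_vals: "dd 1 = 1" "dd (Suc 0) = 1" "dd 2 = 1 / log 2 3" "dd 3 = 1/2"
  by (simp_all add: dd_def lg4)

lemma Zmax: assumes "\<And>\<tau>. \<tau> \<in> rankings 3 \<Longrightarrow> dcg 3 \<tau> r \<le> z" "\<tau>0 \<in> rankings 3" "dcg 3 \<tau>0 r = z"
  shows "Max ((\<lambda>\<tau>. dcg 3 \<tau> r) ` rankings 3) = z"
  using assms by (intro Max_eqI) (auto simp: finite_rankings)

lemma id_r3: "id \<in> rankings 3" by (simp add: rankings_def)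
lemma tr_r3: "a \<in> {1..3} \<Longrightarrow> b \<in> {1..3} \<Longrightarrow> Transposition.transpose a b \<in> rankings 3"
  by (simp add: rankings_def permutes_swap_id)

lemma dd_pos: "k \<in> {1,2,3} \<Longrightarrow> dd k > 0"
  using lg3 by (auto simp: dd_vals)

lemma Z_110: "Max ((\<lambda>\<tau>. dcg 3 \<tau> (vec3 1 1 0)) ` rankings 3) = 1 + 1 / log 2 3"
proof (rule Zmax[OF _ id_r3])
  fix \<tau> assume "\<tau> \<in> rankings 3"
  then show "dcg 3 \<tau> (vec3 1 1 0) \<le> 1 + 1 / log 2 3"
    using perm3_cases[OF \<open>\<tau> \<in> rankings 3\<close>] lg3 by (elim disjE conjE) (simp_all add: dcg_vec3 dd_vals)
qed (simp add: dcg_vec3 dd_vals)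

lemma Z_001: "Max ((\<lambda>\<tau>. dcg 3 \<tau> (vec3 0 0 1)) ` rankings 3) = 1"
proof (rule Zmax[OF _ tr_r3[of 1 3, simplified]])
  fix \<tau> assume "\<tau> \<in> rankings 3"
  then show "dcg 3 \<tau> (vec3 0 0 1) \<le> 1"
    using perm3_cases[OF \<open>\<tau> \<in> rankings 3\<close>] lg3 by (elim disjE conjE) (simp_all add: dcg_vec3 dd_vals)
qed (simp add: dcg_vec3 dd_vals Transposition.transpose_def)

lemma Z_101: "Max ((\<lambda>\<tau>. dcg 3 \<tau> (vec3 1 0 1)) ` rankings 3) = 1 + 1 / log 2 3"
proof (rule Zmax[OF _ tr_r3[of 2 3, simplified]])
  fix \<tau> assume "\<tau> \<in> rankings 3"
  then show "dcg 3 \<tau> (vec3 1 0 1) \<le> 1 + 1 / log 2 3"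
    using perm3_cases[OF \<open>\<tau> \<in> rankings 3\<close>] lg3 by (elim disjE conjE) (simp_all add: dcg_vec3 dd_vals)
qed (simp add: dcg_vec3 dd_vals Transposition.transpose_def)

lemma Z_010: "Max ((\<lambda>\<tau>. dcg 3 \<tau> (vec3 0 1 0)) ` rankings 3) = 1"
proof (rule Zmax[OF _ tr_r3[of 1 2, simplified]])
  fix \<tau> assume "\<tau> \<in> rankings 3"
  then show "dcg 3 \<tau> (vec3 0 1 0) \<le> 1"
    using perm3_cases[OF \<open>\<tau> \<in> rankings 3\<close>] lg3 by (elim disjE conjE) (simp_all add: dcg_vec3 dd_vals)
qed (simp add: dcg_vec3 dd_vals Transposition.transpose_def)

lemma NDCG_vals: assumes "\<sigma> \<in> rankings 3"
  shows "NDCG 3 \<sigma> (vec3 1 1 0) = (dd (\<sigma> 1) + dd (\<sigma> 2)) / (1 + 1 / log 2 3)"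
    "NDCG 3 \<sigma> (vec3 0 0 1) = dd (\<sigma> 3)"
    "NDCG 3 \<sigma> (vec3 1 0 1) = (dd (\<sigma> 1) + dd (\<sigma> 3)) / (1 + 1 / log 2 3)"
    "NDCG 3 \<sigma> (vec3 0 1 0) = dd (\<sigma> 2)"
  unfolding NDCG_def Z_110 Z_001 Z_101 Z_010 by (simp_all add: dcg_vec3)

definition v3 :: "nat \<Rightarrow> relevance" where
  "v3 i = (if i = 0 then vec3 1 1 0 else if i = 1 then vec3 0 0 1 else if i = 2 then vec3 1 0 1 else vec3 0 1 0)"
definition w31 :: "nat \<Rightarrow> real" where "w31 i = (if i \<le> 1 then 1/2 else 0)"
definition w32 :: "nat \<Rightarrow> real" where "w32 i = (if 2 \<le> i then 1/2 else 0)"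
abbreviation "I3 \<equiv> {0,1,2,3::nat}"

lemma gs31: "gs w31 I3 v3 f \<sigma> = (f \<sigma> (vec3 1 1 0) + f \<sigma> (vec3 0 0 1)) / 2"
  by (simp add: gs_def v3_def w31_def)
lemma gs32: "gs w32 I3 v3 f \<sigma> = (f \<sigma> (vec3 1 0 1) + f \<sigma> (vec3 0 1 0)) / 2"
  by (simp add: gs_def v3_def w32_def)
lemma sw31: "sum w31 I3 = 1" by (simp add: w31_def)
lemma sw32: "sum w32 I3 = 1" by (simp add: w32_def)
lemma bin3: "v3 i x \<in> {0,1}" by (simp add: v3_def vec3_def)
lemma marg3: "x \<in> {1..3} \<Longrightarrow> Pm w31 I3 v3 x = Pm w32 I3 v3 x"
proof -
  assume "x \<in> {1..3}"
  then have "x = 1 \<or> x = 2 \<or> x = 3" by auto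
  then show ?thesis by (elim disjE) (simp_all add: Pm_def w31_def w32_def v3_def)
qed

definition aa :: real where "aa = 1 / log 2 3"
lemma aa_b: "1/2 < aa" "aa < 1" using lg3 by (simp_all add: aa_def field_simps)
lemma dd2: "dd 2 = aa" by (simp add: dd_vals aa_def)

definition MN :: real where "MN = ((3/2 + aa/2) / (1 + aa) + 3/2 + aa) / 2"

lemma bndN_alg:
  assumes s: "d1 + d2 + d3 = 3/2 + aa" and d1: "d1 \<ge> 1/2"
  shows "((d1 + d2) / (1 + aa) + d3) / 2 + ((d1 + d3) / (1 + aa) + d2) / 2 \<le> MN"
proof -
  have a: "0 < 1 + aa" "aa > 0" using aa_b by auto
  have k: "(d1 + aa/2) / (1 + aa) \<le> d1"
  proof -
    have "aa/2 \<le> d1 * aa" using d1 a by (simp add: mult_right_mono)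
    then have "d1 + aa/2 \<le> d1 * (1 + aa)" by (simp add: algebra_simps)
    then show ?thesis using a by (simp add: pos_divide_le_eq)
  qed
  have e1: "(d1 + d2) / (1 + aa) + (d1 + d3) / (1 + aa) = (3/2 + aa/2) / (1 + aa) + (d1 + aa/2) / (1 + aa)"
  proof -
    have "(d1 + d2) + (d1 + d3) = (3/2 + aa/2) + (d1 + aa/2)" using s by simp
    then have "((d1 + d2) + (d1 + d3)) / (1 + aa) = ((3/2 + aa/2) + (d1 + aa/2)) / (1 + aa)" by simp
    then show ?thesis by (simp only: add_divide_distrib)
  qed
  have "((d1 + d2) / (1 + aa) + d3) / 2 + ((d1 + d3) / (1 + aa) + d2) / 2
      = ((d1 + d2) / (1 + aa) + (d1 + d3) / (1 + aa) + d2 + d3) / 2"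
  proof -
    have gen: "\<And>X Y::real. (X + d3)/2 + (Y + d2)/2 = (X + Y + d2 + d3)/2" by (simp add: field_simps)
    show ?thesis by (rule gen)
  qed
  also have "\<dots> = ((3/2 + aa/2) / (1 + aa) + (d1 + aa/2) / (1 + aa) + 3/2 + aa - d1) / 2"
    using e1 s by simp
  also have "\<dots> \<le> MN"
  proof -
    have gen: "\<And>P K::real. K \<le> d1 \<Longrightarrow> (P + K + 3/2 + aa - d1) / 2 \<le> (P + 3/2 + aa) / 2" by (simp add: field_simps)
    show ?thesis unfolding MN_def by (rule gen[OF k])
  qed
  finally show ?thesis .
qed

lemma bndN: assumes "\<sigma> \<in> rankings 3"
  shows "gs w31 I3 v3 (NDCG 3) \<sigma> + gs w32 I3 v3 (NDCG 3) \<sigma> \<le> MN"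
proof -
  have a: "1/2 < aa" "aa < 1" using aa_b by auto
  have NV: "NDCG 3 \<sigma> (vec3 1 1 0) = (dd (\<sigma> 1) + dd (\<sigma> 2)) / (1 + aa)"
    "NDCG 3 \<sigma> (vec3 0 0 1) = dd (\<sigma> 3)"
    "NDCG 3 \<sigma> (vec3 1 0 1) = (dd (\<sigma> 1) + dd (\<sigma> 3)) / (1 + aa)"
    "NDCG 3 \<sigma> (vec3 0 1 0) = dd (\<sigma> 2)" using NDCG_vals[OF assms] by (simp_all add: aa_def)
  have "dd (\<sigma> 1) + dd (\<sigma> 2) + dd (\<sigma> 3) = 3/2 + aa \<and> dd (\<sigma> 1) \<ge> 1/2"
    using perm3_cases[OF assms] a by (elim disjE conjE) (simp_all add: dd_vals(1,2,4) dd2)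
  then show ?thesis
    unfolding gs31 gs32 NV using bndN_alg by auto
qed

definition cN :: real where "cN = aa * (1 - aa) / (2 * (1 + aa)) / 2"

lemma gapN: "gs w31 I3 v3 (NDCG 3) (Transposition.transpose 1 3) + gs w32 I3 v3 (NDCG 3) (Transposition.transpose 1 2) - MN \<ge> 2 * cN"
  "cN > 0"
proof -
  have a: "0 < 1 + aa" "aa > 0" "aa < 1" using aa_b by auto
  have NV: "NDCG 3 \<sigma> (vec3 1 1 0) = (dd (\<sigma> 1) + dd (\<sigma> 2)) / (1 + aa)"
    "NDCG 3 \<sigma> (vec3 0 0 1) = dd (\<sigma> 3)"
    "NDCG 3 \<sigma> (vec3 1 0 1) = (dd (\<sigma> 1) + dd (\<sigma> 3)) / (1 + aa)"
    "NDCG 3 \<sigma> (vec3 0 1 0) = dd (\<sigma> 2)" if "\<sigma> \<in> rankings 3" for \<sigma> using NDCG_vals[OF that] by (simp_all add: aa_def)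
  have r1: "Transposition.transpose 1 3 \<in> rankings 3" and r2: "Transposition.transpose 1 2 \<in> rankings 3"
    by (simp_all add: tr_r3)
  have "gs w31 I3 v3 (NDCG 3) (Transposition.transpose 1 3) + gs w32 I3 v3 (NDCG 3) (Transposition.transpose 1 2) - MN
     = ((1/2 + aa) / (1 + aa) + 1) / 2 + ((aa + 1/2) / (1 + aa) + 1) / 2 - MN"
    unfolding gs31 gs32 NV[OF r1] NV[OF r2] by (simp add: dd_vals(1,2,4) dd2 Transposition.transpose_def)
  also have "\<dots> = ((1/2 + aa) / (1 + aa) + 1) - ((3/2 + aa/2) / (1 + aa) + 3/2 + aa) / 2"
    unfolding MN_def by (simp add: algebra_simps)
  also have "\<dots> = aa * (1 - aa) / (2 * (1 + aa))"
  proof -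
    define q where "q = 1 / (1 + aa)"
    have hq: "q * (1 + aa) = 1" using a by (simp add: q_def)
    have dv: "\<And>x. x / (1 + aa) = x * q" by (simp add: q_def)
    have "((1/2 + aa) * q + 1) - ((3/2 + aa/2) * q + 3/2 + aa) / 2 - aa * (1 - aa) * q / 2 = (2*aa-1)/4 * (q*(1+aa) - 1)"
      by (simp add: field_simps)
    then have e: "((1/2 + aa) * q + 1) - ((3/2 + aa/2) * q + 3/2 + aa) / 2 = aa * (1 - aa) * q / 2"
      using hq by simp
    have r: "aa * (1 - aa) / (2 * (1 + aa)) = aa * (1 - aa) * q / 2" by (simp add: q_def)
    show ?thesis unfolding r unfolding dv by (rule e)
  qed
  also have "aa * (1 - aa) / (2 * (1 + aa)) = 2 * cN"
  proof -
    have g: "\<And>X::real. X = 2 * (X / 2)" by simp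
    show ?thesis unfolding cN_def by (rule g)
  qed
  finally show "gs w31 I3 v3 (NDCG 3) (Transposition.transpose 1 3) + gs w32 I3 v3 (NDCG 3) (Transposition.transpose 1 2) - MN \<ge> 2 * cN" by simp
  show "cN > 0" unfolding cN_def using a by simp
qed

lemma invs3: assumes "\<sigma> \<in> rankings 3"
  shows "inv \<sigma> (\<sigma> 1) = 1" "inv \<sigma> (\<sigma> 2) = 2" "inv \<sigma> (\<sigma> 3) = 3"
  using inv_val[OF assms] by auto

definition MM :: real where "MM = 35/24"

lemma bndM: assumes "\<sigma> \<in> rankings 3"
  shows "gs w31 I3 v3 (MAP 3) \<sigma> + gs w32 I3 v3 (MAP 3) \<sigma> \<le> MM"
  unfolding gs31 gs32 MAP3 norm13 MM_def
  using perm3_cases[OF assms] invs3[OF assms]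
  by (elim disjE conjE) simp_all

lemma gapM: "gs w31 I3 v3 (MAP 3) (Transposition.transpose 1 3) + gs w32 I3 v3 (MAP 3) (Transposition.transpose 1 2) - MM \<ge> 2 * (1/16)"
proof -
  have r1: "Transposition.transpose 1 3 \<in> rankings 3" and r2: "Transposition.transpose 1 2 \<in> rankings 3"
    by (simp_all add: tr_r3)
  have i1: "inv (Transposition.transpose (1::nat) 3) = Transposition.transpose 1 3" by simp
  have i2: "inv (Transposition.transpose (1::nat) 2) = Transposition.transpose 1 2" by simp
  show ?thesis unfolding gs31 gs32 MAP3 norm13 MM_def i1 i2 by (simp add: Transposition.transpose_def)
qed


lemma set14: "{1..4::nat} = {1,2,3,4}" by auto

definition vec4 :: "real \<Rightarrow> real \<Rightarrow> real \<Rightarrow> real \<Rightarrow> relevance" where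
  "vec4 a b c d = (\<lambda>x. if x = 1 then a else if x = 2 then b else if x = 3 then c else if x = 4 then d else 0)"

lemma vec4_simps[simp]: "vec4 a b c d 1 = a" "vec4 a b c d (Suc 0) = a" "vec4 a b c d 2 = b"
  "vec4 a b c d 3 = c" "vec4 a b c d 4 = d"
  by (simp_all add: vec4_def)

definition ind :: "ranking \<Rightarrow> nat \<Rightarrow> nat \<Rightarrow> real" where
  "ind \<sigma> i j = (if \<sigma> i < \<sigma> j then 1 else 0)"

lemma AUC4: "AUC 4 \<sigma> r = (1 / (norm1 4 r * (4 - norm1 4 r))) *
  (\<Sum>i\<in>{1,2,3,4}. \<Sum>j\<in>{1,2,3,4}. ind \<sigma> i j * (if r i < r j then 1 else 0))"
  unfolding AUC_def set14 ind_def by simp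

lemma norm14: "norm1 4 r = \<bar>r 1\<bar> + \<bar>r 2\<bar> + \<bar>r 3\<bar> + \<bar>r 4\<bar>"
  unfolding norm1_def set14 by simp

lemma AUC_vals:
  "AUC 4 \<sigma> (vec4 0 0 0 1) = (ind \<sigma> 1 4 + ind \<sigma> 2 4 + ind \<sigma> 3 4) / 3"
  "AUC 4 \<sigma> (vec4 0 1 1 0) = (ind \<sigma> 1 2 + ind \<sigma> 1 3 + ind \<sigma> 4 2 + ind \<sigma> 4 3) / 4"
  "AUC 4 \<sigma> (vec4 0 0 1 0) = (ind \<sigma> 1 3 + ind \<sigma> 2 3 + ind \<sigma> 4 3) / 3"
  "AUC 4 \<sigma> (vec4 0 1 0 1) = (ind \<sigma> 1 2 + ind \<sigma> 1 4 + ind \<sigma> 3 2 + ind \<sigma> 3 4) / 4"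
  unfolding AUC4 norm14 by simp_all

definition v4 :: "nat \<Rightarrow> relevance" where
  "v4 i = (if i = 0 then vec4 0 0 0 1 else if i = 1 then vec4 0 1 1 0 else if i = 2 then vec4 0 0 1 0 else vec4 0 1 0 1)"

definition nAUC :: "ranking \<Rightarrow> relevance \<Rightarrow> real" where "nAUC \<sigma> r = - AUC 4 \<sigma> r"

lemma gs41: "gs w31 I3 v4 f \<sigma> = (f \<sigma> (vec4 0 0 0 1) + f \<sigma> (vec4 0 1 1 0)) / 2"
  by (simp add: gs_def v4_def w31_def)
lemma gs42: "gs w32 I3 v4 f \<sigma> = (f \<sigma> (vec4 0 0 1 0) + f \<sigma> (vec4 0 1 0 1)) / 2"
  by (simp add: gs_def v4_def w32_def)
lemma bin4: "v4 i x \<in> {0,1}" by (simp add: v4_def vec4_def)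
lemma marg4: "x \<in> {1..4} \<Longrightarrow> Pm w31 I3 v4 x = Pm w32 I3 v4 x"
proof -
  assume "x \<in> {1..4}"
  then have "x = 1 \<or> x = 2 \<or> x = 3 \<or> x = 4" by auto
  then show ?thesis by (elim disjE) (simp_all add: Pm_def w31_def w32_def v4_def)
qed

lemma ind_compl: assumes "\<sigma> \<in> rankings 4" "i \<in> {1..4}" "j \<in> {1..4}" "i \<noteq> j"
  shows "ind \<sigma> j i = 1 - ind \<sigma> i j"
proof -
  have "\<sigma> permutes {1..4}" using assms(1) by (simp add: rankings_def)
  then have "\<sigma> i \<noteq> \<sigma> j" using assms(4) permutes_inj by (metis injD)
  then have "\<sigma> j < \<sigma> i \<longleftrightarrow> \<not> \<sigma> i < \<sigma> j" by linarith
  then show ?thesis by (simp add: ind_def)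
qed

lemma ind_nn: "ind \<sigma> i j \<ge> 0" by (simp add: ind_def)

lemma bndA: assumes "\<sigma> \<in> rankings 4"
  shows "gs w31 I3 v4 nAUC \<sigma> + gs w32 I3 v4 nAUC \<sigma> \<le> - 13/24"
proof -
  have c: "ind \<sigma> 3 2 = 1 - ind \<sigma> 2 3" "ind \<sigma> 4 2 = 1 - ind \<sigma> 2 4" "ind \<sigma> 4 3 = 1 - ind \<sigma> 3 4"
    using ind_compl[OF assms, of 2 3] ind_compl[OF assms, of 2 4] ind_compl[OF assms, of 3 4] by simp_all
  show ?thesis unfolding gs41 gs42 nAUC_def AUC_vals c
    using ind_nn[of \<sigma> 1 4] ind_nn[of \<sigma> 2 4] ind_nn[of \<sigma> 3 4] ind_nn[of \<sigma> 1 2] ind_nn[of \<sigma> 1 3]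
      ind_nn[of \<sigma> 2 3] by (simp add: field_simps)
qed

definition \<rho>A2 :: ranking where "\<rho>A2 = Transposition.transpose 1 3 \<circ> Transposition.transpose 1 4"

lemma gapA: "gs w31 I3 v4 nAUC (Transposition.transpose 1 4) + gs w32 I3 v4 nAUC \<rho>A2 - (- 13/24) \<ge> 2 * (1/48)"
  unfolding gs41 gs42 nAUC_def AUC_vals by (simp add: ind_def \<rho>A2_def Transposition.transpose_def)

lemma rA: "Transposition.transpose 1 4 \<in> rankings 4" "\<rho>A2 \<in> rankings 4"
  by (simp_all add: rankings_def \<rho>A2_def permutes_swap_id permutes_compose)


lemma exp_cum_neg: "exp_cum (\<lambda>\<sigma> r. - f \<sigma> r) L rs h k = - exp_cum f L rs h k"
proof (induction k arbitrary: h)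
  case 0 then show ?case by simp
next
  case (Suc k)
  have "(\<lambda>\<sigma>. - f \<sigma> (rs (length h)) + exp_cum (\<lambda>\<sigma> r. - f \<sigma> r) L rs (h @ [(\<sigma>, rs (length h) (inv \<sigma> 1))]) k)
      = (\<lambda>\<sigma>. - (f \<sigma> (rs (length h)) + exp_cum f L rs (h @ [(\<sigma>, rs (length h) (inv \<sigma> 1))]) k))"
    using Suc.IH by simp
  then show ?case by (simp only: exp_cum.simps integral_minus)
qed

lemma loss_as_gain: "regret_loss m f L rs T = regret_gain m (\<lambda>\<sigma> r. - f \<sigma> r) L rs T"
proof -
  have A: "(\<lambda>\<sigma>. \<Sum>t<T. - f \<sigma> (rs t)) ` rankings m = uminus ` ((\<lambda>\<sigma>. \<Sum>t<T. f \<sigma> (rs t)) ` rankings m)"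
    by (auto simp: image_image sum_negf)
  have ne: "rankings m \<noteq> {}" by (auto simp: rankings_def intro!: exI[of _ id])
  have "Max ((\<lambda>\<sigma>. \<Sum>t<T. - f \<sigma> (rs t)) ` rankings m) = - Min ((\<lambda>\<sigma>. \<Sum>t<T. f \<sigma> (rs t)) ` rankings m)"
    unfolding A by (rule minus_Min_eq_Max[symmetric]) (use ne finite_rankings in auto)
  then show ?thesis unfolding regret_loss_def regret_gain_def exp_cum_neg by simp
qed

theorem theorem6:
  shows "(\<exists>m::nat. \<exists>c>0. \<exists>T0. \<forall>T\<ge>T0. \<forall>L. valid_learner m L \<longrightarrow>
            (\<exists>rs. binary_seq m T rs \<and> regret_gain m (NDCG m) L rs T \<ge> c * real T))
       \<and> (\<exists>m::nat. \<exists>c>0. \<exists>T0. \<forall>T\<ge>T0. \<forall>L. valid_learner m L \<longrightarrow>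
            (\<exists>rs. binary_seq m T rs \<and> regret_gain m (MAP m) L rs T \<ge> c * real T))
       \<and> (\<exists>m::nat. \<exists>c>0. \<exists>T0. \<forall>T\<ge>T0. \<forall>L. valid_learner m L \<longrightarrow>
            (\<exists>rs. binary_seq m T rs \<and> regret_loss m (AUC m) L rs T \<ge> c * real T))"
proof (intro conjI)
  have nn1: "\<And>i. i \<in> I3 \<Longrightarrow> w31 i \<ge> 0" by (simp add: w31_def)
  have nn2: "\<And>i. i \<in> I3 \<Longrightarrow> w32 i \<ge> 0" by (simp add: w32_def)
  have r13: "Transposition.transpose 1 3 \<in> rankings 3" and r12: "Transposition.transpose 1 2 \<in> rankings 3"
    by (simp_all add: tr_r3)
  show "\<exists>m::nat. \<exists>c>0. \<exists>T0. \<forall>T\<ge>T0. \<forall>L. valid_learner m L \<longrightarrow>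
            (\<exists>rs. binary_seq m T rs \<and> regret_gain m (NDCG m) L rs T \<ge> c * real T)"
    using generic_gain[where m=3 and I=I3 and wa=w31 and wb=w32 and v=v3 and f="NDCG 3" and M=MN,
        OF _ nn1 sw31 nn2 sw32 bin3 marg3 bndN _ r13 r12 gapN(1)] gapN(2)
    by (intro exI[of _ 3] exI[of _ cN] conjI exI[of _ 0]) auto
  show "\<exists>m::nat. \<exists>c>0. \<exists>T0. \<forall>T\<ge>T0. \<forall>L. valid_learner m L \<longrightarrow>
            (\<exists>rs. binary_seq m T rs \<and> regret_gain m (MAP m) L rs T \<ge> c * real T)"
    using generic_gain[where m=3 and I=I3 and wa=w31 and wb=w32 and v=v3 and f="MAP 3" and M=MM,
        OF _ nn1 sw31 nn2 sw32 bin3 marg3 bndM _ r13 r12 gapM]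
    by (intro exI[of _ 3] exI[of _ "1/16"] conjI exI[of _ 0]) auto
  show "\<exists>m::nat. \<exists>c>0. \<exists>T0. \<forall>T\<ge>T0. \<forall>L. valid_learner m L \<longrightarrow>
            (\<exists>rs. binary_seq m T rs \<and> regret_loss m (AUC m) L rs T \<ge> c * real T)"
    using generic_gain[where m=4 and I=I3 and wa=w31 and wb=w32 and v=v4 and f=nAUC and M="-13/24",
        OF _ nn1 sw31 nn2 sw32 bin4 marg4 bndA _ rA gapA]
    unfolding loss_as_gain nAUC_def[abs_def]
    by (intro exI[of _ 4] exI[of _ "1/48"] conjI exI[of _ 0]) auto
qed


end
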